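(* Let $p\in[1,\infty]$ and let $(X,d,\mu)$ be a metric measure space which is $p$-thick quasiconvex with constant $C\ge1$. Then $d_p$ is a metric on $X$ and $d\le d_p\le Cd$.
   Context: A metric measure space is a proper metric space with a Borel regular outer measure positive and finite on balls. $\operatorname{Mod}_p\Gamma=\inf\int\rho^pd\mu$ (for $p<\infty$), $\operatorname{Mod}_\infty\Gamma=\inf\|\rho\|_{L^\infty}$, over Borel $\rho\ge0$ with $\int_\gamma\rho\ge1$ on $\Gamma$. $\Gamma(E,F;C)$ is the family of curves $\gamma:[0,1]\to X$ with $\gamma(0)\in E,\gamma(1)\in F,\ell(\gamma)\le Cd(\gamma(0),\gamma(1))$; $X$ is $p$-thick quasiconvex with constant $C$ if $\operatorname{Mod}_p\Gamma(E,F;C)>0$ for all measurable $E,F$ of positive measure. With $\Gamma(E,F)$ the Lipschitz curves $[0,1]\to X$ from $E$ to $F$, set $ess\ell_p(\Gamma):=\sup_{\operatorname{Mod}_p\Gamma_0=0}\inf\{\ell(\gamma):\gamma\in\Gamma\setminus\Gamma_0\}$ ($\inf\emptyset=\infty$), $d_p'(x,y):=\lim_{\delta\to0}ess\ell_p\Gamma(\bar B(x,\delta),\bar B(y,\delta))$, and $d_p(x,y):=\inf\{\sum_{i=1}^nd_p'(x_{i-1},x_i):n\in\mathbb N,x_0=x,x_n=y\}$. *)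

theory Defs
  imports "HOL-Analysis.Analysis" "HOL-Probability.Essential_Supremum"
begin

text \<open>Curves are maps real to X, considered on the parameter interval [0,1].\<close>

definition length_on :: "(real \<Rightarrow> 'a::metric_space) \<Rightarrow> real \<Rightarrow> real \<Rightarrow> ennreal" where
  "length_on \<gamma> a b =
     (SUP ts \<in> {ts. sorted ts \<and> set ts \<subseteq> {a..b}}.
        (\<Sum>i < length ts - 1. ennreal (dist (\<gamma> (ts ! i)) (\<gamma> (ts ! Suc i)))))"

definition curve_length :: "(real \<Rightarrow> 'a::metric_space) \<Rightarrow> ennreal" where
  "curve_length \<gamma> = length_on \<gamma> 0 1"

definition length_fun :: "(real \<Rightarrow> 'a::metric_space) \<Rightarrow> real \<Rightarrow> real" where
  "length_fun \<gamma> t = enn2real (length_on \<gamma> 0 (max 0 (min 1 t)))"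

text \<open>Line integral of a Borel function along a (rectifiable) curve, as the
  Lebesgue--Stieltjes integral with respect to arc length ds.\<close>
definition line_integral :: "('a::metric_space \<Rightarrow> ennreal) \<Rightarrow> (real \<Rightarrow> 'a) \<Rightarrow> ennreal" where
  "line_integral \<rho> \<gamma> = (\<integral>\<^sup>+ t. \<rho> (\<gamma> t) \<partial>(interval_measure (length_fun \<gamma>)))"

definition admissible :: "(real \<Rightarrow> 'a::metric_space) set \<Rightarrow> ('a \<Rightarrow> ennreal) \<Rightarrow> bool" where
  "admissible \<Gamma> \<rho> \<longleftrightarrow> \<rho> \<in> borel_measurable borel \<and> (\<forall>\<gamma>\<in>\<Gamma>. 1 \<le> line_integral \<rho> \<gamma>)"

definition ennpow :: "ennreal \<Rightarrow> real \<Rightarrow> ennreal" where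
  "ennpow x q = (if x = \<infinity> then \<infinity> else ennreal (enn2real x powr q))"

definition Mod :: "'a::metric_space measure \<Rightarrow> ennreal \<Rightarrow> (real \<Rightarrow> 'a) set \<Rightarrow> ennreal" where
  "Mod \<mu> p \<Gamma> =
     (if p = \<infinity> then (INF \<rho> \<in> {\<rho>. admissible \<Gamma> \<rho>}. esssup \<mu> \<rho>)
      else (INF \<rho> \<in> {\<rho>. admissible \<Gamma> \<rho>}. \<integral>\<^sup>+ x. ennpow (\<rho> x) (enn2real p) \<partial>\<mu>))"

definition curvesC :: "'a::metric_space set \<Rightarrow> 'a set \<Rightarrow> real \<Rightarrow> (real \<Rightarrow> 'a) set" where
  "curvesC E F C = {\<gamma>. continuous_on {0..1} \<gamma> \<and> \<gamma> 0 \<in> E \<and> \<gamma> 1 \<in> F \<and>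
                        curve_length \<gamma> \<le> ennreal (C * dist (\<gamma> 0) (\<gamma> 1))}"

definition thick_quasiconvex :: "'a::metric_space measure \<Rightarrow> ennreal \<Rightarrow> real \<Rightarrow> bool" where
  "thick_quasiconvex \<mu> p C \<longleftrightarrow>
     (\<forall>E F. E \<in> sets (completion \<mu>) \<longrightarrow> F \<in> sets (completion \<mu>) \<longrightarrow>
        0 < emeasure (completion \<mu>) E \<longrightarrow> 0 < emeasure (completion \<mu>) F \<longrightarrow>
        0 < Mod \<mu> p (curvesC E F C))"

definition lip_curves :: "'a::metric_space set \<Rightarrow> 'a set \<Rightarrow> (real \<Rightarrow> 'a) set" where
  "lip_curves E F = {\<gamma>. (\<exists>L. L-lipschitz_on {0..1} \<gamma>) \<and> \<gamma> 0 \<in> E \<and> \<gamma> 1 \<in> F}"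

definition ess_length :: "'a::metric_space measure \<Rightarrow> ennreal \<Rightarrow> (real \<Rightarrow> 'a) set \<Rightarrow> ennreal" where
  "ess_length \<mu> p \<Gamma> =
     (SUP \<Gamma>0 \<in> {\<Gamma>0. Mod \<mu> p \<Gamma>0 = 0}. INF \<gamma> \<in> \<Gamma> - \<Gamma>0. curve_length \<gamma>)"

definition dp' :: "'a::metric_space measure \<Rightarrow> ennreal \<Rightarrow> 'a \<Rightarrow> 'a \<Rightarrow> ennreal" where
  "dp' \<mu> p x y = Lim (at_right (0::real)) (\<lambda>\<delta>. ess_length \<mu> p (lip_curves (cball x \<delta>) (cball y \<delta>)))"

definition dp :: "'a::metric_space measure \<Rightarrow> ennreal \<Rightarrow> 'a \<Rightarrow> 'a \<Rightarrow> ennreal" where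
  "dp \<mu> p x y =
     (INF xs \<in> {xs. 2 \<le> length xs \<and> hd xs = x \<and> last xs = y}.
        (\<Sum>i < length xs - 1. dp' \<mu> p (xs ! i) (xs ! Suc i)))"

end

theory Submission
  imports Defs "HOL-Probability.Distribution_Functions"
begin


fun plen :: "(real \<Rightarrow> 'a::metric_space) \<Rightarrow> real list \<Rightarrow> ennreal" where
  "plen g (t # u # ts) = ennreal (dist (g t) (g u)) + plen g (u # ts)"
| "plen g _ = 0"

lemma sum_plen: "(\<Sum>i < length ts - 1. ennreal (dist (g (ts ! i)) (g (ts ! Suc i)))) = plen g ts"
proof (induction g ts rule: plen.induct)
  case (1 g t u ts)
  have "(\<Sum>i < length (t # u # ts) - 1. ennreal (dist (g ((t # u # ts) ! i)) (g ((t # u # ts) ! Suc i))))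
      = (\<Sum>i < Suc (length (u # ts) - 1). ennreal (dist (g ((t # u # ts) ! i)) (g ((t # u # ts) ! Suc i))))"
    by simp
  also have "\<dots> = ennreal (dist (g t) (g u)) + (\<Sum>i < length (u # ts) - 1. ennreal (dist (g ((u # ts) ! i)) (g ((u # ts) ! Suc i))))"
    by (subst sum.lessThan_Suc_shift) simp
  finally show ?case using 1 by simp
qed auto

lemma length_on_plen: "length_on g a b = (SUP ts \<in> {ts. sorted ts \<and> set ts \<subseteq> {a..b}}. plen g ts)"
  unfolding length_on_def sum_plen ..

lemma plen_upper: "sorted ts \<Longrightarrow> set ts \<subseteq> {a..b} \<Longrightarrow> plen g ts \<le> length_on g a b"
  unfolding length_on_plen by (rule SUP_upper) auto

lemma plen_append:
  "xs \<noteq> [] \<Longrightarrow> ys \<noteq> [] \<Longrightarrow> plen g (xs @ ys) = plen g xs + ennreal (dist (g (last xs)) (g (hd ys))) + plen g ys"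
proof (induction xs rule: induct_list012)
  case (3 x y zs)
  then show ?case by (cases ys) (auto simp: add_ac)
next
  case (2 x)
  then show ?case by (cases ys) auto
qed auto

lemma plen_Cons_ge: "plen g ts \<le> plen g (t # ts)"
  by (cases ts) auto

lemma plen_split:
  "plen g (xs @ ys) \<le> plen g (xs @ [b]) + plen g (b # ys)"
proof (cases "xs = [] \<or> ys = []")
  case True
  then show ?thesis
  proof
    assume "xs = []" then show ?thesis using plen_Cons_ge[of g ys b] by (simp add: add_increasing)
  next
    assume "ys = []" then show ?thesis
    proof (cases "xs = []")
      case False
      then show ?thesis using \<open>ys = []\<close> by (simp add: plen_append add_increasing2)
    qed (simp add: \<open>ys = []\<close>)
  qed
next
  case False
  then have "plen g (xs @ ys) = plen g xs + ennreal (dist (g (last xs)) (g (hd ys))) + plen g ys"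
    by (simp add: plen_append)
  also have "\<dots> \<le> plen g xs + (ennreal (dist (g (last xs)) (g b)) + ennreal (dist (g b) (g (hd ys)))) + plen g ys"
    by (intro add_mono order_refl) (metis ennreal_leI ennreal_plus zero_le_dist dist_triangle)
  also have "\<dots> = plen g (xs @ [b]) + plen g (b # ys)"
    using False by (cases ys) (auto simp: plen_append add_ac)
  finally show ?thesis .
qed

lemma plen_map: "plen g (map f ts) = plen (g \<circ> f) ts"
  by (induction g ts rule: plen.induct) auto

lemma plen_rev: "plen g (rev ts) = plen g ts"
proof (induction ts rule: induct_list012)
  case (3 x y zs)
  have "plen g (rev (x # y # zs)) = plen g (rev (y # zs) @ [x])" by simp
  also have "\<dots> = plen g (rev (y # zs)) + ennreal (dist (g y) (g x))"
    by (subst plen_append) (auto simp: last_rev)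
  also have "\<dots> = plen g (x # y # zs)" using 3 by (simp add: dist_commute add_ac)
  finally show ?case .
qed auto

lemma plen_cong: "(\<And>t. t \<in> set ts \<Longrightarrow> g t = h t) \<Longrightarrow> plen g ts = plen h ts"
  by (induction g ts rule: plen.induct) auto

lemma plen_const: "(\<And>t. t \<in> set ts \<Longrightarrow> t = c) \<Longrightarrow> plen g ts = 0"
  by (induction g ts rule: plen.induct) auto

lemma plen_lipschitz:
  assumes "K-lipschitz_on S g" "set ts \<subseteq> S" "sorted ts" "ts \<noteq> []"
  shows "plen g ts \<le> ennreal (K * (last ts - hd ts))"
  using assms(2-)
proof (induction ts rule: induct_list012)
  case (3 t u ts)
  note 1 = 3
  note lip = assms(1)
  have "K \<ge> 0" using lip by (simp add: lipschitz_on_def)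
  have tu: "t \<le> u" "t \<in> S" "u \<in> S" using 1(3,4) by auto
  have d: "dist (g t) (g u) \<le> K * (u - t)"
    using lip tu unfolding lipschitz_on_def by (metis dist_real_def abs_of_nonpos diff_le_0_iff_le minus_diff_eq dist_commute)
  have ih: "plen g (u # ts) \<le> ennreal (K * (last (u # ts) - u))"
    using 1 by auto
  have "last (u # ts) \<ge> u" using 1(4) by (cases ts) (auto simp: sorted_append)
  have "plen g (t # u # ts) \<le> ennreal (K * (u - t)) + ennreal (K * (last (u # ts) - u))"
    using d ih by (auto intro!: add_mono ennreal_leI)
  also have "\<dots> = ennreal (K * (last (t # u # ts) - hd (t # u # ts)))"
    using \<open>K \<ge> 0\<close> tu \<open>last (u # ts) \<ge> u\<close>
    by (subst ennreal_plus[symmetric]) (auto simp: algebra_simps intro: mult_left_mono)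
  finally show ?case .
qed auto

lemma length_on_ge_dist:
  assumes "a \<le> a'" "a' \<le> b'" "b' \<le> b"
  shows "ennreal (dist (g a') (g b')) \<le> length_on g a b"
  using plen_upper[of "[a',b']" a b g] assms by simp

lemma length_on_ge_dist':
  assumes "a' \<in> {a..b}" "b' \<in> {a..b}"
  shows "ennreal (dist (g a') (g b')) \<le> length_on g a b"
  using assms length_on_ge_dist[of a a' b' b g] length_on_ge_dist[of a b' a' b g]
  by (cases "a' \<le> b'") (auto simp: dist_commute)

lemma length_on_mono:
  assumes "a \<le> a'" "b' \<le> b"
  shows "length_on g a' b' \<le> length_on g a b"
  unfolding length_on_plen using assms by (intro SUP_subset_mono) auto

lemma dropWhile_gt:
  "sorted ts \<Longrightarrow> y \<in> set (dropWhile (\<lambda>t. t \<le> b) ts) \<Longrightarrow> b < y"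
proof (induction ts)
  case (Cons t ts)
  then show ?case by (cases "t \<le> b") (auto split: if_splits)
qed auto

lemma length_on_add:
  assumes "a \<le> b" "b \<le> c"
  shows "length_on g a c = length_on g a b + length_on g b c"
proof (rule antisym)
  show "length_on g a c \<le> length_on g a b + length_on g b c"
    unfolding length_on_plen[of g a c]
  proof (rule SUP_least)
    fix ts assume ts: "ts \<in> {ts. sorted ts \<and> set ts \<subseteq> {a..c}}"
    define xs where "xs = takeWhile (\<lambda>t. t \<le> b) ts"
    define ys where "ys = dropWhile (\<lambda>t. t \<le> b) ts"
    have ts_eq: "ts = xs @ ys" unfolding xs_def ys_def by simp
    have "sorted (xs @ ys)" using ts ts_eq by simp
    then have s1: "sorted xs" "sorted ys" by (auto simp: sorted_append)
    have xb: "\<forall>x\<in>set xs. x \<le> b" unfolding xs_def by (auto dest: set_takeWhileD)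
    have yb: "\<forall>y\<in>set ys. b < y" unfolding ys_def using ts dropWhile_gt by blast
    have "plen g ts \<le> plen g (xs @ [b]) + plen g (b # ys)" using ts_eq plen_split by metis
    also have "\<dots> \<le> length_on g a b + length_on g b c"
    proof (intro add_mono plen_upper)
      show "sorted (xs @ [b])" using s1 xb by (auto simp: sorted_append)
      show "set (xs @ [b]) \<subseteq> {a..b}" using xb ts ts_eq assms by auto
      show "sorted (b # ys)" using s1 yb by (auto simp: less_imp_le)
      show "set (b # ys) \<subseteq> {b..c}" using yb ts ts_eq assms by (auto simp: less_imp_le)
    qed
    finally show "plen g ts \<le> length_on g a b + length_on g b c" .
  qed
next
  have ne: "{ts. sorted ts \<and> set ts \<subseteq> {x..y}} \<noteq> {}" for x y :: real
  proof -
    have "[] \<in> {ts. sorted ts \<and> set ts \<subseteq> {x..y}}" by simp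
    then show ?thesis by blast
  qed
  have "length_on g a b + length_on g b c =
      (SUP xs \<in> {ts. sorted ts \<and> set ts \<subseteq> {a..b}}. SUP ys \<in> {ts. sorted ts \<and> set ts \<subseteq> {b..c}}. plen g xs + plen g ys)"
    unfolding length_on_plen
    by (simp add: ennreal_SUP_add_left[OF ne, symmetric] ennreal_SUP_add_right[OF ne]) (rule SUP_commute)
  also have "\<dots> \<le> length_on g a c"
  proof (intro SUP_least)
    fix xs ys assume xs: "xs \<in> {ts. sorted ts \<and> set ts \<subseteq> {a..b}}" and ys: "ys \<in> {ts. sorted ts \<and> set ts \<subseteq> {b..c}}"
    have "plen g xs + plen g ys \<le> plen g (xs @ ys)"
    proof (cases "xs = [] \<or> ys = []")
      case False
      then show ?thesis by (simp add: plen_append)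
    qed auto
    also have "\<dots> \<le> length_on g a c"
    proof (rule plen_upper)
      have "x \<le> y" if "x \<in> set xs" "y \<in> set ys" for x y
      proof -
        have "x \<le> b" "b \<le> y" using that xs ys by auto
        then show ?thesis by linarith
      qed
      then show "sorted (xs @ ys)" using xs ys by (simp add: sorted_append)
      show "set (xs @ ys) \<subseteq> {a..c}" using xs ys assms by auto
    qed
    finally show "plen g xs + plen g ys \<le> length_on g a c" .
  qed
  finally show "length_on g a b + length_on g b c \<le> length_on g a c" .
qed

lemma length_on_reparam:
  assumes mono: "\<And>s t. s \<in> {a..b} \<Longrightarrow> t \<in> {a..b} \<Longrightarrow> s \<le> t \<Longrightarrow> \<phi> s \<le> \<phi> t"
    and img: "\<phi> ` {a..b} \<subseteq> {c..d}"
    and eq: "\<And>t. t \<in> {a..b} \<Longrightarrow> \<beta> (\<phi> t) = g t"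
  shows "length_on g a b \<le> length_on \<beta> c d"
  unfolding length_on_plen[of g a b]
proof (rule SUP_least)
  fix ts assume ts: "ts \<in> {ts. sorted ts \<and> set ts \<subseteq> {a..b}}"
  have "plen g ts = plen (\<beta> \<circ> \<phi>) ts" using ts eq by (intro plen_cong) auto
  also have "\<dots> = plen \<beta> (map \<phi> ts)" by (simp add: plen_map)
  also have "\<dots> \<le> length_on \<beta> c d"
  proof (rule plen_upper)
    have "sorted_wrt (\<lambda>x y. \<phi> x \<le> \<phi> y) ts"
    proof (rule sorted_wrt_mono_rel[of ts "(\<le>)"])
      show "sorted_wrt (\<le>) ts" using ts by simp
      fix x y assume "x \<in> set ts" "y \<in> set ts" "x \<le> y"
      then show "\<phi> x \<le> \<phi> y" using ts by (intro mono) auto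
    qed
    then show "sorted (map \<phi> ts)" by (simp add: sorted_map)
    show "set (map \<phi> ts) \<subseteq> {c..d}" using ts img by auto
  qed
  finally show "plen g ts \<le> length_on \<beta> c d" .
qed

lemma length_on_lipschitz:
  assumes "K-lipschitz_on {a..b} g" "a \<le> b"
  shows "length_on g a b \<le> ennreal (K * (b - a))"
  unfolding length_on_plen
proof (rule SUP_least)
  fix ts assume ts: "ts \<in> {ts. sorted ts \<and> set ts \<subseteq> {a..b}}"
  show "plen g ts \<le> ennreal (K * (b - a))"
  proof (cases "ts = []")
    case False
    have K: "K \<ge> 0" using assms by (simp add: lipschitz_on_def)
    have "hd ts \<in> set ts" "last ts \<in> set ts" using False by auto
    then have "hd ts \<in> {a..b}" "last ts \<in> {a..b}" using ts by auto
    then have "K * (last ts - hd ts) \<le> K * (b - a)" using K by (auto intro: mult_left_mono)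
    then have "ennreal (K * (last ts - hd ts)) \<le> ennreal (K * (b - a))" by (rule ennreal_leI)
    moreover have "plen g ts \<le> ennreal (K * (last ts - hd ts))"
      using plen_lipschitz[OF assms(1)] ts False by auto
    ultimately show ?thesis by (rule order_trans[rotated])
  qed simp
qed

lemma length_on_cong:
  assumes "\<And>t. t \<in> {a..b} \<Longrightarrow> g t = h t"
  shows "length_on g a b = length_on h a b"
  unfolding length_on_plen using assms by (intro SUP_cong refl plen_cong) auto



lemma length_on_reflect_le:
  "length_on (\<lambda>t. g (c - t)) a b \<le> length_on g (c - b) (c - a)"
  unfolding length_on_plen[of "\<lambda>t. g (c - t)"]
proof (rule SUP_least)
  fix ts assume ts: "ts \<in> {ts. sorted ts \<and> set ts \<subseteq> {a..b}}"
  have "plen (\<lambda>t. g (c - t)) ts = plen g (map (\<lambda>t. c - t) ts)" by (simp add: plen_map o_def)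
  also have "\<dots> = plen g (rev (map (\<lambda>t. c - t) ts))" by (simp add: plen_rev)
  also have "\<dots> \<le> length_on g (c - b) (c - a)"
  proof (rule plen_upper)
    show "sorted (rev (map (\<lambda>t. c - t) ts))"
      using ts by (simp add: sorted_wrt_rev sorted_wrt_map)
    show "set (rev (map (\<lambda>t. c - t) ts)) \<subseteq> {c - b..c - a}" using ts by auto
  qed
  finally show "plen (\<lambda>t. g (c - t)) ts \<le> length_on g (c - b) (c - a)" .
qed

lemma length_on_reflect:
  "length_on (\<lambda>t. g (c - t)) a b = length_on g (c - b) (c - a)"
proof (rule antisym)
  show "length_on g (c - b) (c - a) \<le> length_on (\<lambda>t. g (c - t)) a b"
    using length_on_reflect_le[of "\<lambda>t. g (c - t)" c "c - b" "c - a"] by simp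
qed (rule length_on_reflect_le)


lemma length_on_refl: "length_on g a a = 0"
  unfolding length_on_plen
proof (rule antisym[OF SUP_least])
  fix ts assume "ts \<in> {ts. sorted ts \<and> set ts \<subseteq> {a..a}}"
  then have "plen g ts = 0" by (intro plen_const) auto
  then show "plen g ts \<le> 0" by simp
qed simp

lemma length_right_small:
  assumes cont: "continuous_on {0..1} g" and fin: "length_on g 0 1 < \<infinity>"
    and t0: "0 \<le> t0" "t0 < 1" and e: "0 < e"
  shows "\<exists>h>t0. h \<le> 1 \<and> length_on g t0 h < ennreal e"
proof -
  have "length_on g t0 1 \<le> length_on g 0 1" using t0 by (intro length_on_mono) auto
  then have "length_on g t0 1 < \<infinity>" using fin by auto
  then obtain r where r: "length_on g t0 1 = ennreal r" "0 \<le> r" by (cases "length_on g t0 1") auto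
  show ?thesis
  proof (cases "r < e")
    case True
    then show ?thesis using t0 r e by (intro exI[of _ 1]) (auto intro: ennreal_lessI)
  next
    case False
    define e' where "e' = e / 2"
    have e': "0 < e'" "e = 2 * e'" using e by (auto simp: e'_def)
    have "ennreal (r - e') < length_on g t0 1" using r False e' by (subst r(1)) (auto simp: ennreal_less_iff)
    then obtain ts where ts: "sorted ts" "set ts \<subseteq> {t0..1}" and lt: "ennreal (r - e') < plen g ts"
      unfolding length_on_plen less_SUP_iff by auto
    obtain \<delta> where \<delta>: "\<delta> > 0" "\<And>t. t \<in> {0..1} \<Longrightarrow> dist t t0 < \<delta> \<Longrightarrow> dist (g t) (g t0) < e'"
      using cont t0 e' unfolding continuous_on_iff by (metis atLeastAtMost_iff less_le_not_le)
    define m where "m = Min (insert 1 {t \<in> set ts. t0 < t})"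
    have mfin: "finite (insert 1 {t \<in> set ts. t0 < t})" by auto
    have m1: "m \<le> 1" unfolding m_def using mfin by (intro Min_le) auto
    have mt0: "t0 < m" unfolding m_def using mfin t0 by (subst Min_gr_iff) auto
    have mle: "m \<le> t" if "t \<in> set ts" "t0 < t" for t unfolding m_def using mfin that by (intro Min_le) auto
    define h where "h = min (t0 + \<delta> / 2) ((t0 + m) / 2)"
    have h: "t0 < h" "h < m" "h \<le> 1" "dist h t0 < \<delta>" using mt0 m1 \<delta>(1)
      by (auto simp: h_def dist_real_def min_def)
    define xs where "xs = takeWhile (\<lambda>t. t \<le> h) ts"
    define ys where "ys = dropWhile (\<lambda>t. t \<le> h) ts"
    have ts_eq: "ts = xs @ ys" unfolding xs_def ys_def by simp
    have xs_t0: "x = t0" if "x \<in> set xs" for x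
    proof -
      have x: "x \<in> set ts" "x \<le> h" using that unfolding xs_def by (auto dest: set_takeWhileD)
      then have "x \<ge> t0" using ts by auto
      moreover have "\<not> t0 < x" using x mle[of x] h by fastforce
      ultimately show ?thesis by auto
    qed
    have yb: "\<forall>y\<in>set ys. h < y" unfolding ys_def using ts dropWhile_gt by blast
    have s1: "sorted ys" using ts ts_eq by (simp add: sorted_append)
    have p1: "plen g (xs @ [h]) \<le> ennreal (dist (g t0) (g h))"
    proof (cases "xs = []")
      case False
      then have "last xs = t0" using xs_t0 last_in_set by blast
      then show ?thesis using False by (simp add: plen_append plen_const[OF xs_t0])
    qed simp
    have p2: "plen g (h # ys) \<le> length_on g h 1"
      using yb s1 ts ts_eq h by (intro plen_upper) (auto simp: less_imp_le)
    have "ennreal (r - e') < ennreal (dist (g t0) (g h)) + length_on g h 1"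
      using lt plen_split[of g xs ys h] p1 p2 ts_eq by (metis add_mono order_less_le_trans order_trans)
    moreover have "length_on g h 1 \<le> length_on g t0 1" using h t0 by (intro length_on_mono) auto
    then obtain b where b: "length_on g h 1 = ennreal b" "0 \<le> b" using r
      by (cases "length_on g h 1") (auto simp: top_unique)
    moreover have "length_on g t0 h \<le> length_on g t0 1" using h t0 by (intro length_on_mono) auto
    then obtain a where a: "length_on g t0 h = ennreal a" "0 \<le> a" using r
      by (cases "length_on g t0 h") (auto simp: top_unique)
    moreover have "length_on g t0 1 = length_on g t0 h + length_on g h 1"
      using h by (intro length_on_add) auto
    moreover have "0 \<le> r - e'" using False e' by simp
    ultimately have "r - e' < dist (g t0) (g h) + b" "r = a + b"
      using r by (auto simp: ennreal_plus[symmetric] ennreal_less_iff simp del: ennreal_plus)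
    moreover have "dist (g t0) (g h) < e'" using \<delta>(2)[of h] h t0 by (auto simp: dist_commute)
    ultimately have "a < e" using e' by linarith
    then show ?thesis using a h by (intro exI[of _ h]) (auto simp: ennreal_less_iff)
  qed
qed

lemma continuous_on_reflect01:
  fixes g :: "real \<Rightarrow> 'a::topological_space"
  shows "continuous_on {0..1} g \<Longrightarrow> continuous_on {0..1} (\<lambda>t. g (1 - t))"
proof -
  have c: "continuous_on {0..1} (\<lambda>t::real. 1 - t)" by (intro continuous_intros)
  assume g: "continuous_on {0..1} g"
  show ?thesis by (rule continuous_on_compose2[OF g c]) auto
qed

lemma length_left_small:
  assumes cont: "continuous_on {0..1} g" and fin: "length_on g 0 1 < \<infinity>"
    and t0: "0 < t0" "t0 \<le> 1" and e: "0 < e"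
  shows "\<exists>h<t0. 0 \<le> h \<and> length_on g h t0 < ennreal e"
proof -
  have c': "continuous_on {0..1} (\<lambda>t. g (1 - t))" using cont by (rule continuous_on_reflect01)
  have f': "length_on (\<lambda>t. g (1 - t)) 0 1 < \<infinity>" using fin by (simp add: length_on_reflect)
  obtain h where "h > 1 - t0" "h \<le> 1" "length_on (\<lambda>t. g (1 - t)) (1 - t0) h < ennreal e"
    using length_right_small[OF c' f', of "1 - t0" e] t0 e by auto
  then show ?thesis by (intro exI[of _ "1 - h"]) (auto simp: length_on_reflect)
qed

lemma length_real_add:
  assumes fin: "length_on g 0 1 < \<infinity>" and "0 \<le> a" "a \<le> b" "b \<le> 1"
  shows "enn2real (length_on g a b) = enn2real (length_on g 0 b) - enn2real (length_on g 0 a)"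
proof -
  have "length_on g 0 b = length_on g 0 a + length_on g a b" using assms by (intro length_on_add) auto
  moreover have "length_on g 0 a < \<infinity>" "length_on g a b < \<infinity>"
    using fin assms length_on_mono[of 0 0 a 1 g] length_on_mono[of 0 a b 1 g] by auto
  ultimately show ?thesis by (simp add: enn2real_plus)
qed

lemma length_continuous:
  assumes cont: "continuous_on {0..1} g" and fin: "length_on g 0 1 < \<infinity>"
  shows "continuous_on {0..1} (\<lambda>t. enn2real (length_on g 0 t))"
  unfolding continuous_on_iff
proof (intro ballI allI impI)
  fix x e :: real assume x: "x \<in> {0..1}" and e: "0 < e"
  define s where "s t = enn2real (length_on g 0 t)" for t
  obtain hr where hr: "x < 1 \<Longrightarrow> hr > x \<and> hr \<le> 1 \<and> length_on g x hr < ennreal e"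
    using length_right_small[OF cont fin, of x e] x e by (cases "x < 1") auto
  obtain hl where hl: "0 < x \<Longrightarrow> hl < x \<and> 0 \<le> hl \<and> length_on g hl x < ennreal e"
    using length_left_small[OF cont fin, of x e] x e by (cases "0 < x") auto
  define d where "d = min (if x < 1 then hr - x else 1) (if 0 < x then x - hl else 1)"
  have "d > 0" using hr hl by (auto simp: d_def)
  moreover have "dist (s x') (s x) < e" if x': "x' \<in> {0..1}" "dist x' x < d" for x'
  proof (cases "x \<le> x'")
    case True
    show ?thesis
    proof (cases "x < 1")
      case True
      have "x' \<le> hr" using x' \<open>x \<le> x'\<close> True by (auto simp: d_def dist_real_def)
      then have "length_on g x x' \<le> length_on g x hr" by (intro length_on_mono) auto
      then have "length_on g x x' < ennreal e" using hr True by auto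
      moreover have "length_on g x x' < top" using calculation by (metis ennreal_less_top order.strict_trans)
      ultimately have "enn2real (length_on g x x') < e" using e by simp
      then show ?thesis using length_real_add[OF fin, of x x'] x x' \<open>x \<le> x'\<close> enn2real_nonneg[of "length_on g x x'"]
        by (auto simp: s_def dist_real_def)
    next
      case False
      then have "x' = x" using x x' True by auto
      then show ?thesis using e by simp
    qed
  next
    case False
    show ?thesis
    proof (cases "0 < x")
      case True
      have "hl \<le> x'" using x' \<open>\<not> x \<le> x'\<close> True by (auto simp: d_def dist_real_def)
      then have "length_on g x' x \<le> length_on g hl x" by (intro length_on_mono) auto
      then have "length_on g x' x < ennreal e" using hl True by auto
      moreover have "length_on g x' x < top" using calculation by (metis ennreal_less_top order.strict_trans)
      ultimately have "enn2real (length_on g x' x) < e" using e by simp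
      then show ?thesis using length_real_add[OF fin, of x' x] x x' \<open>\<not> x \<le> x'\<close> enn2real_nonneg[of "length_on g x' x"]
        by (auto simp: s_def dist_real_def)
    next
      case False
      then show ?thesis using x x' \<open>\<not> x \<le> x'\<close> by auto
    qed
  qed
  ultimately show "\<exists>d>0. \<forall>x'\<in>{0..1}. dist x' x < d \<longrightarrow> dist (enn2real (length_on g 0 x')) (enn2real (length_on g 0 x)) < e"
    unfolding s_def by blast
qed




lemma interval_measure_push:
  fixes F :: "real \<Rightarrow> real" and L :: real
  assumes cont: "continuous_on UNIV F" and mono: "mono F"
    and F0: "\<And>t. t \<le> 0 \<Longrightarrow> F t = 0" and F1: "\<And>t. 1 \<le> t \<Longrightarrow> F t = L"
  shows "AE t in interval_measure F. 0 < t \<and> t \<le> 1"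
    and "distr (interval_measure F) borel F = density lborel (indicator {0..L})"
proof -
  define M where "M = interval_measure F"
  have L: "0 \<le> L" using F0[of 0] F1[of 1] mono[THEN monoD, of 0 1] by simp
  have isc: "isCont F x" for x using cont by (simp add: continuous_on_eq_continuous_at)
  have rc: "continuous (at_right a) F" for a
    using isc[of a] by (rule continuous_at_imp_continuous_at_within)
  have monoF: "x \<le> y \<Longrightarrow> F x \<le> F y" for x y using mono by (simp add: monoD)
  have sM[simp]: "sets M = sets borel" "space M = UNIV" by (simp_all add: M_def)
  have Ioc: "a \<le> b \<Longrightarrow> emeasure M {a<..b} = ennreal (F b - F a)" for a b
    unfolding M_def by (rule emeasure_interval_measure_Ioc) (auto intro: monoF rc)
  have bot: "(F \<longlongrightarrow> 0) at_bot"
    by (rule tendsto_eventually) (auto simp: eventually_at_bot_linorder intro!: exI[of _ 0] F0)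
  have top: "(F \<longlongrightarrow> L) at_top"
    by (rule tendsto_eventually) (auto simp: eventually_at_top_linorder intro!: exI[of _ 1] F1)
  have UNIV: "emeasure M UNIV = L"
    unfolding M_def by (rule interval_measure_UNIV[OF monoF rc bot top L])
  have "emeasure M {0<..1} = L" using Ioc[of 0 1] F0[of 0] F1[of 1] by simp
  then have null: "emeasure M (UNIV - {0<..1}) = 0"
    using UNIV by (subst emeasure_Diff) auto
  show AE: "AE t in interval_measure F. 0 < t \<and> t \<le> 1"
    using null unfolding M_def[symmetric] by (intro AE_I[of _ _ "UNIV - {0<..1}"]) auto
  have "measurable M (borel::real measure) = measurable (borel::real measure) (borel::real measure)" by (rule measurable_cong_sets) auto
  then have Fmeas: "F \<in> measurable M borel" using borel_measurable_continuous_onI[OF cont]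
    by simp
  show "distr (interval_measure F) borel F = density lborel (indicator {0..L})"
    unfolding M_def[symmetric]
  proof (rule measure_eqI_lessThan)
    show "sets (distr M borel F) = sets borel" "sets (density lborel (indicator {0..L})) = sets borel" by auto
    have "emeasure (distr M borel F) {x<..} = emeasure M {t. x < F t}" for x
      by (subst emeasure_distr[OF Fmeas]) (auto simp: vimage_def)
    note distr_eq = this
    show "emeasure (distr M borel F) {x<..} < \<infinity>" for x
    proof -
      have "emeasure M {t. x < F t} \<le> emeasure M UNIV" by (rule emeasure_mono) auto
      then have "emeasure M {t. x < F t} \<le> ennreal L" using UNIV by simp
      then have "emeasure M {t. x < F t} < top" using ennreal_less_top[of L] by (rule le_less_trans)
      then show ?thesis unfolding distr_eq by simp
    qed
    show "emeasure (distr M borel F) {x<..} = emeasure (density lborel (indicator {0..L})) {x<..}" for x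
    proof -
      have Fm: "{t. x < F t} \<in> sets M" using measurable_sets[OF Fmeas, of "{x<..}"] by (simp add: vimage_def)
      have "emeasure M {t. x < F t} = emeasure M ({t. x < F t} \<inter> {0<..1})"
        using AE[folded M_def] Fm by (intro emeasure_eq_AE) auto
      also have "\<dots> = ennreal (max 0 (min L (L - x)))"
      proof (cases "x < 0")
        case True
        have "{t. x < F t} \<inter> {0<..1} = {0<..1}"
        proof safe
          fix t :: real assume "t \<in> {0<..1}"
          then have "F 0 \<le> F t" by (intro monoF) auto
          then show "x < F t" using True F0[of 0] by simp
        qed
        then show ?thesis using Ioc[of 0 1] F0[of 0] F1[of 1] True L by simp
      next
        case False
        show ?thesis
        proof (cases "L \<le> x")
          case True
          have FL: "F t \<le> L" for t using monoF[of t "max t 1"] F1[of "max t 1"] by simp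
          have "\<not> x < F t" for t using FL[of t] True by linarith
          then have "{t. x < F t} \<inter> {0<..1} = {}" by auto
          then show ?thesis using True by simp
        next
          case False
          define S where "S = {t \<in> {0..1}. F t \<le> x}"
          have S0: "0 \<in> S" using F0[of 0] \<open>\<not> x < 0\<close> by (simp add: S_def)
          have Sb: "bdd_above S" by (auto simp: S_def bdd_above_def)
          have Scl: "closed S" unfolding S_def
            using continuous_closed_preimage[of "{0..1}" F "{..x}"] continuous_on_subset[OF cont]
            by (auto simp: vimage_def Int_def)
          define t0 where "t0 = Sup S"
          have t0S: "t0 \<in> S" unfolding t0_def using S0 Sb Scl by (intro closed_contains_Sup) auto
          have gt: "x < F t" if "t0 < t" "t \<le> 1" for t
          proof (rule ccontr)
            assume "\<not> x < F t"
            then have "t \<in> S" using that t0S by (auto simp: S_def)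
            then have "t \<le> t0" unfolding t0_def using Sb by (rule cSup_upper)
            then show False using that by simp
          qed
          obtain t1 where t1: "0 \<le> t1" "t1 \<le> 1" "F t1 = x"
            using IVT'[of F 0 x 1] continuous_on_subset[OF cont] F0[of 0] F1[of 1] False \<open>\<not> x < 0\<close>
            by auto
          have "t1 \<le> t0" unfolding t0_def using t1 Sb by (intro cSup_upper) (auto simp: S_def)
          then have Ft0: "F t0 = x" using monoF[of t1 t0] t0S t1 by (auto simp: S_def)
          have "t0 < 1" using t0S F1[of 1] False Ft0 by (auto simp: S_def less_le)
          have "{t. x < F t} \<inter> {0<..1} = {t0<..1}"
          proof safe
            fix t assume "x < F t" "t \<in> {0<..1}"
            then show "t \<in> {t0<..1}" using monoF[of t t0] Ft0 by (cases "t \<le> t0") auto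
          next
            fix t assume "t \<in> {t0<..1}"
            then show "x < F t" "t \<in> {0<..1}" using gt t0S by (auto simp: S_def)
          qed
          then show ?thesis using Ioc[of t0 1] \<open>t0 < 1\<close> F1[of 1] Ft0 False \<open>\<not> x < 0\<close>
            by (simp add: max_def min_def)
        qed
      qed
      also have "\<dots> = emeasure lborel ({0..L} \<inter> {x<..})"
      proof (cases "x < 0")
        case True
        then have "{0..L} \<inter> {x<..} = {0..L}" by auto
        then show ?thesis using True L by (simp add: max_def min_def)
      next
        case False
        show ?thesis
        proof (cases "L \<le> x")
          case True
          then have "{0..L} \<inter> {x<..} = {}" by auto
          then show ?thesis using True by (simp add: max_def min_def)
        next
          case False
          then have "{0..L} \<inter> {x<..} = {x<..L}" using \<open>\<not> x < 0\<close> by auto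
          then show ?thesis using False \<open>\<not> x < 0\<close> by (simp add: max_def min_def)
        qed
      qed
      also have "\<dots> = emeasure (density lborel (indicator {0..L})) {x<..}"
        by (rule emeasure_restricted[symmetric]) auto
      finally show ?thesis unfolding distr_eq .
    qed
  qed
qed




lemma length_fin_sub:
  assumes "length_on g 0 1 < \<infinity>" "0 \<le> a" "b \<le> 1"
  shows "length_on g a b < \<infinity>"
  using length_on_mono[of 0 a b 1 g] assms by auto

lemma dist_le_length_real:
  assumes fin: "length_on g 0 1 < \<infinity>" and t: "t1 \<in> {0..1}" "t2 \<in> {0..1}"
  shows "dist (g t1) (g t2) \<le> \<bar>enn2real (length_on g 0 t1) - enn2real (length_on g 0 t2)\<bar>"
proof -
  have *: "dist (g a) (g b) \<le> enn2real (length_on g 0 b) - enn2real (length_on g 0 a)"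
    if "0 \<le> a" "a \<le> b" "b \<le> 1" for a b
  proof -
    have "ennreal (dist (g a) (g b)) \<le> length_on g a b" by (rule length_on_ge_dist) (use that in auto)
    then have "enn2real (ennreal (dist (g a) (g b))) \<le> enn2real (length_on g a b)"
      using length_fin_sub[OF fin, of a b] that by (intro enn2real_mono) auto
    then show ?thesis using length_real_add[OF fin, of a b] that by simp
  qed
  show ?thesis
  proof (cases "t1 \<le> t2")
    case True then show ?thesis using *[of t1 t2] t by auto
  next
    case False then show ?thesis using *[of t2 t1] t by (auto simp: dist_commute)
  qed
qed

lemma arc_param:
  fixes \<gamma> :: "real \<Rightarrow> 'a::metric_space"
  assumes cont: "continuous_on {0..1} \<gamma>" and fin: "length_on \<gamma> 0 1 < \<infinity>"
  obtains A where "1-lipschitz_on UNIV A"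
    "\<And>t. t \<in> {0..1} \<Longrightarrow> A (enn2real (length_on \<gamma> 0 t)) = \<gamma> t"
proof -
  define s where "s t = enn2real (length_on \<gamma> 0 t)" for t
  define L where "L = s 1"
  have sc: "continuous_on {0..1} s" unfolding s_def by (rule length_continuous[OF cont fin])
  have s0: "s 0 = 0" by (simp add: s_def length_on_refl)
  have sle: "s t \<le> L" "0 \<le> s t" if "t \<in> {0..1}" for t
    unfolding s_def L_def using that fin by (auto intro!: enn2real_mono length_on_mono)
  have ex: "\<exists>t. t \<in> {0..1} \<and> s t = max 0 (min L v)" for v
  proof -
    have "0 \<le> L" using sle[of 1] by auto
    then show ?thesis using IVT'[of s 0 "max 0 (min L v)" 1] sc s0 by (auto simp: L_def)
  qed
  define \<sigma> where "\<sigma> v = (SOME t. t \<in> {0..1} \<and> s t = max 0 (min L v))" for v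
  have \<sigma>: "\<sigma> v \<in> {0..1}" "s (\<sigma> v) = max 0 (min L v)" for v
    using someI_ex[OF ex[of v]] by (auto simp: \<sigma>_def)
  define A where "A v = \<gamma> (\<sigma> v)" for v
  show ?thesis
  proof
    show "1-lipschitz_on UNIV A"
    proof (rule lipschitz_onI)
      fix v w :: real
      have "dist (A v) (A w) \<le> \<bar>s (\<sigma> v) - s (\<sigma> w)\<bar>"
        unfolding A_def s_def using dist_le_length_real[OF fin \<sigma>(1) \<sigma>(1)] by blast
      also have "\<dots> \<le> 1 * dist v w" using \<sigma>(2)[of v] \<sigma>(2)[of w] by (simp add: dist_real_def max_def min_def)
      finally show "dist (A v) (A w) \<le> 1 * dist v w" .
    qed simp
    fix t :: real assume t: "t \<in> {0..1}"
    have "dist (A (s t)) (\<gamma> t) \<le> \<bar>s (\<sigma> (s t)) - s t\<bar>"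
      unfolding A_def s_def using dist_le_length_real[OF fin \<sigma>(1) t] by blast
    also have "\<dots> = 0" using \<sigma>(2)[of "s t"] sle[OF t] by simp
    finally show "A (enn2real (length_on \<gamma> 0 t)) = \<gamma> t" unfolding s_def by simp
  qed
qed

lemma line_integral_formula:
  fixes \<gamma> :: "real \<Rightarrow> 'a::metric_space"
  assumes cont: "continuous_on {0..1} \<gamma>" and fin: "length_on \<gamma> 0 1 < \<infinity>"
    and A: "continuous_on UNIV A" and hA: "\<And>t. t \<in> {0..1} \<Longrightarrow> A (enn2real (length_on \<gamma> 0 t)) = \<gamma> t"
    and \<rho>: "\<rho> \<in> borel_measurable borel"
  shows "line_integral \<rho> \<gamma> = (\<integral>\<^sup>+ v. indicator {0..enn2real (length_on \<gamma> 0 1)} v * \<rho> (A v) \<partial>lborel)"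
proof -
  define s where "s t = enn2real (length_on \<gamma> 0 t)" for t
  define L where "L = s 1"
  define F where "F = length_fun \<gamma>"
  have F_eq: "F t = s (max 0 (min 1 t))" for t by (simp add: F_def length_fun_def s_def)
  have sc: "continuous_on {0..1} s" unfolding s_def by (rule length_continuous[OF cont fin])
  have Fc: "continuous_on UNIV F" unfolding F_eq
    by (rule continuous_on_compose2[OF sc]) (auto intro!: continuous_intros)
  have smono: "s a \<le> s b" if "0 \<le> a" "a \<le> b" "b \<le> 1" for a b
    unfolding s_def using that fin length_fin_sub[OF fin, of 0 b] by (auto intro!: enn2real_mono length_on_mono)
  have Fmono: "mono F" unfolding F_eq by (rule monoI, rule smono) auto
  have F0: "F t = 0" if "t \<le> 0" for t using that by (simp add: F_eq s_def length_on_refl)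
  have F1: "F t = L" if "1 \<le> t" for t using that by (simp add: F_eq L_def)
  note push = interval_measure_push[OF Fc Fmono F0 F1]
  have "line_integral \<rho> \<gamma> = (\<integral>\<^sup>+ t. \<rho> (\<gamma> t) \<partial>interval_measure F)"
    by (simp add: line_integral_def F_def)
  also have "\<dots> = (\<integral>\<^sup>+ t. \<rho> (A (F t)) \<partial>interval_measure F)"
  proof (rule nn_integral_cong_AE)
    show "AE t in interval_measure F. \<rho> (\<gamma> t) = \<rho> (A (F t))"
    proof (rule AE_mp[OF push(1) AE_I2], safe)
      fix t :: real assume "0 < t" "t \<le> 1"
      then show "\<rho> (\<gamma> t) = \<rho> (A (F t))" by (simp add: F_eq hA[unfolded s_def[symmetric]])
    qed
  qed
  also have "\<dots> = (\<integral>\<^sup>+ v. \<rho> (A v) \<partial>distr (interval_measure F) borel F)"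
  proof (rule nn_integral_distr[symmetric])
    have "measurable (interval_measure F) (borel::real measure) = measurable (borel::real measure) (borel::real measure)" by (rule measurable_cong_sets) auto
    then show "F \<in> measurable (interval_measure F) borel"
      using borel_measurable_continuous_onI[OF Fc] by simp
    show "(\<lambda>v. \<rho> (A v)) \<in> borel_measurable (distr (interval_measure F) borel F)"
      using measurable_comp[OF borel_measurable_continuous_onI[OF A] \<rho>] by (simp add: o_def)
  qed
  also have "\<dots> = (\<integral>\<^sup>+ v. \<rho> (A v) \<partial>density lborel (indicator {0..L}))" by (simp add: push(2))
  also have "\<dots> = (\<integral>\<^sup>+ v. indicator {0..L} v * \<rho> (A v) \<partial>lborel)"
    using measurable_comp[OF borel_measurable_continuous_onI[OF A] \<rho>]
    by (subst nn_integral_density) (auto simp: o_def)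
  finally show ?thesis by (simp add: L_def s_def)
qed


lemma arc_curve:
  fixes \<gamma> :: "real \<Rightarrow> 'a::metric_space"
  assumes cont: "continuous_on {0..1} \<gamma>" and fin: "length_on \<gamma> 0 1 < \<infinity>"
  obtains \<beta> where "(enn2real (length_on \<gamma> 0 1))-lipschitz_on {0..1} \<beta>" "\<beta> 0 = \<gamma> 0" "\<beta> 1 = \<gamma> 1"
    "length_on \<beta> 0 1 = length_on \<gamma> 0 1"
    "\<And>\<rho>. \<rho> \<in> borel_measurable borel \<Longrightarrow> line_integral \<rho> \<beta> = line_integral \<rho> \<gamma>"
proof -
  obtain A where A: "1-lipschitz_on UNIV A" "\<And>t. t \<in> {0..1} \<Longrightarrow> A (enn2real (length_on \<gamma> 0 t)) = \<gamma> t"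
    using arc_param[OF cont fin] by blast
  define s where "s t = enn2real (length_on \<gamma> 0 t)" for t
  define L where "L = s 1"
  have sc: "continuous_on {0..1} s" unfolding s_def by (rule length_continuous[OF cont fin])
  have s0: "s 0 = 0" by (simp add: s_def length_on_refl)
  have smono: "s a \<le> s b" if "0 \<le> a" "a \<le> b" "b \<le> 1" for a b
    unfolding s_def using that fin length_fin_sub[OF fin, of 0 b] by (auto intro!: enn2real_mono length_on_mono)
  have L0: "0 \<le> L" using smono[of 0 1] s0 by (simp add: L_def)
  have sfin: "length_on \<gamma> 0 t = ennreal (s t)" if "t \<in> {0..1}" for t
    using length_fin_sub[OF fin, of 0 t] that by (simp add: s_def)
  have Ac: "continuous_on UNIV A" using A(1) by (rule lipschitz_on_continuous_on)
  define \<beta> where "\<beta> u = A (L * u)" for u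
  have lip: "L-lipschitz_on {0..1} \<beta>"
  proof (rule lipschitz_onI)
    fix u v :: real
    have "dist (\<beta> u) (\<beta> v) \<le> 1 * dist (L * u) (L * v)"
      unfolding \<beta>_def using A(1) by (simp add: lipschitz_on_def)
    also have "\<dots> = L * dist u v" using L0 by (simp add: dist_real_def right_diff_distrib[symmetric] abs_mult)
    finally show "dist (\<beta> u) (\<beta> v) \<le> L * dist u v" .
  qed (rule L0)
  have b0: "\<beta> 0 = \<gamma> 0" using A(2)[of 0] by (simp add: \<beta>_def length_on_refl)
  have b1: "\<beta> 1 = \<gamma> 1" using A(2)[of 1] by (simp add: \<beta>_def L_def s_def)
  have lenb: "length_on \<beta> 0 u = ennreal (L * u)" if u: "u \<in> {0..1}" for u
  proof (rule antisym)
    show "length_on \<beta> 0 u \<le> ennreal (L * u)"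
      using length_on_lipschitz[OF lipschitz_on_subset[OF lip, of "{0..u}"]] u by simp
    show "ennreal (L * u) \<le> length_on \<beta> 0 u"
    proof (cases "L = 0")
      case False
      then have Lp: "0 < L" using L0 by simp
      have "L * u \<le> L" using L0 u by (simp add: mult_left_le)
      then obtain tu where tu: "0 \<le> tu" "tu \<le> 1" "s tu = L * u"
        using IVT'[of s 0 "L * u" 1] sc s0 u L0 by (auto simp: L_def)
      have "ennreal (L * u) = length_on \<gamma> 0 tu" using sfin[of tu] tu by simp
      also have "\<dots> \<le> length_on \<beta> 0 u"
      proof (rule length_on_reparam[where \<phi> = "\<lambda>t. s t / L"])
        show "s a / L \<le> s b / L" if "a \<in> {0..tu}" "b \<in> {0..tu}" "a \<le> b" for a b
          using smono[of a b] that tu Lp by (auto intro: divide_right_mono)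
        show "(\<lambda>t. s t / L) ` {0..tu} \<subseteq> {0..u}"
        proof safe
          fix t assume "t \<in> {0..tu}"
          then have "0 \<le> s t" "s t \<le> s tu" using smono[of 0 t] smono[of t tu] s0 tu by auto
          then show "s t / L \<in> {0..u}" using tu Lp by (auto simp: divide_le_eq mult.commute)
        qed
        show "\<beta> (s t / L) = \<gamma> t" if "t \<in> {0..tu}" for t
          using A(2)[of t] that tu Lp by (simp add: \<beta>_def s_def)
      qed
      finally show ?thesis .
    qed simp
  qed
  have lb1: "length_on \<beta> 0 1 = length_on \<gamma> 0 1" using lenb[of 1] sfin[of 1] by (simp add: L_def)
  have bc: "continuous_on {0..1} \<beta>" using lip by (rule lipschitz_on_continuous_on)
  have bfin: "length_on \<beta> 0 1 < \<infinity>" using lb1 fin by simp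
  have li: "line_integral \<rho> \<beta> = line_integral \<rho> \<gamma>" if \<rho>: "\<rho> \<in> borel_measurable borel" for \<rho>
  proof -
    have "line_integral \<rho> \<beta> = (\<integral>\<^sup>+ v. indicator {0..enn2real (length_on \<beta> 0 1)} v * \<rho> (A v) \<partial>lborel)"
    proof (rule line_integral_formula[OF bc bfin Ac _ \<rho>])
      show "A (enn2real (length_on \<beta> 0 u)) = \<beta> u" if "u \<in> {0..1}" for u
        using lenb[OF that] that L0 by (simp add: \<beta>_def)
    qed
    also have "\<dots> = line_integral \<rho> \<gamma>"
      using line_integral_formula[OF cont fin Ac A(2) \<rho>] lb1 by simp
    finally show ?thesis .
  qed
  show ?thesis
    using that[OF _ b0 b1 lb1 li] lip by (simp add: L_def s_def)
qed

lemma reverse_curve: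
  fixes \<gamma> :: "real \<Rightarrow> 'a::metric_space"
  assumes cont: "continuous_on {0..1} \<gamma>" and fin: "length_on \<gamma> 0 1 < \<infinity>"
    and \<rho>: "\<rho> \<in> borel_measurable borel"
  shows "line_integral \<rho> (\<lambda>t. \<gamma> (1 - t)) = line_integral \<rho> \<gamma>"
proof -
  obtain A where A: "1-lipschitz_on UNIV A" "\<And>t. t \<in> {0..1} \<Longrightarrow> A (enn2real (length_on \<gamma> 0 t)) = \<gamma> t"
    using arc_param[OF cont fin] by blast
  have Ac: "continuous_on UNIV A" using A(1) by (rule lipschitz_on_continuous_on)
  define L where "L = enn2real (length_on \<gamma> 0 1)"
  have rc: "continuous_on {0..1} (\<lambda>t. \<gamma> (1 - t))" using cont by (rule continuous_on_reflect01)
  have rlen: "length_on (\<lambda>t. \<gamma> (1 - t)) 0 t = length_on \<gamma> (1 - t) 1" for t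
    using length_on_reflect[of \<gamma> 1 0 t] by simp
  have rfin: "length_on (\<lambda>t. \<gamma> (1 - t)) 0 1 < \<infinity>" using fin by (simp add: rlen)
  have Arc: "continuous_on UNIV (\<lambda>v. A (L - v))"
    by (rule continuous_on_compose2[OF Ac]) (auto intro!: continuous_intros)
  have "line_integral \<rho> (\<lambda>t. \<gamma> (1 - t)) =
      (\<integral>\<^sup>+ v. indicator {0..enn2real (length_on (\<lambda>t. \<gamma> (1 - t)) 0 1)} v * \<rho> (A (L - v)) \<partial>lborel)"
  proof (rule line_integral_formula[OF rc rfin Arc _ \<rho>])
    fix t :: real assume t: "t \<in> {0..1}"
    have "enn2real (length_on (\<lambda>t. \<gamma> (1 - t)) 0 t) = L - enn2real (length_on \<gamma> 0 (1 - t))"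
      unfolding rlen L_def using length_real_add[OF fin, of "1 - t" 1] t by simp
    then show "A (L - enn2real (length_on (\<lambda>t. \<gamma> (1 - t)) 0 t)) = \<gamma> (1 - t)"
      using A(2)[of "1 - t"] t by simp
  qed
  also have "\<dots> = (\<integral>\<^sup>+ v. indicator {0..L} v * \<rho> (A (L - v)) \<partial>lborel)"
    by (simp add: rlen L_def)
  also have "\<dots> = (\<integral>\<^sup>+ v. indicator {0..L} v * \<rho> (A v) \<partial>lborel)"
  proof -
    have m: "(\<lambda>v. indicator {0..L} v * \<rho> (A v)) \<in> borel_measurable borel"
      using measurable_comp[OF borel_measurable_continuous_onI[OF Ac] \<rho>] by (auto simp: o_def)
    have "(\<integral>\<^sup>+ v. indicator {0..L} v * \<rho> (A v) \<partial>lborel) =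
        (\<integral>\<^sup>+ v. indicator {0..L} (L - v) * \<rho> (A (L - v)) \<partial>lborel)"
      using nn_integral_real_affine[OF m, of "-1" L] by simp
    also have "\<dots> = (\<integral>\<^sup>+ v. indicator {0..L} v * \<rho> (A (L - v)) \<partial>lborel)"
      by (intro nn_integral_cong) (auto simp: indicator_def)
    finally show ?thesis by simp
  qed
  also have "\<dots> = line_integral \<rho> \<gamma>"
    using line_integral_formula[OF cont fin Ac A(2) \<rho>] by (simp add: L_def)
  finally show ?thesis .
qed



lemma Mod_mono_adm:
  assumes "\<And>\<rho>. admissible \<Gamma>0 \<rho> \<Longrightarrow> admissible \<Gamma>1 \<rho>"
  shows "Mod \<mu> p \<Gamma>1 \<le> Mod \<mu> p \<Gamma>0"
  unfolding Mod_def using assms by (auto intro!: INF_superset_mono)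

lemma Mod_empty: "Mod \<mu> p {} = 0"
proof -
  have adm: "admissible {} (\<lambda>_. 0)" by (simp add: admissible_def)
  show ?thesis
  proof (cases "p = \<infinity>")
    case True
    have "Limsup (ae_filter \<mu>) (\<lambda>_. 0::ennreal) \<le> 0" by (rule Limsup_bounded) simp
    then have "esssup \<mu> (\<lambda>_. 0::ennreal) \<le> 0"
      by (simp add: esssup_def)
    moreover have "Mod \<mu> p {} \<le> esssup \<mu> (\<lambda>_. 0::ennreal)" unfolding Mod_def using True adm
      by (auto intro!: INF_lower)
    ultimately have "Mod \<mu> p {} \<le> 0" by (rule order_trans[rotated])
    then show ?thesis by simp
  next
    case False
    have "Mod \<mu> p {} \<le> (\<integral>\<^sup>+ x. ennpow ((\<lambda>_. 0::ennreal) x) (enn2real p) \<partial>\<mu>)"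
      unfolding Mod_def if_not_P[OF False] by (rule INF_lower) (simp add: adm)
    also have "\<dots> = 0" by (simp add: ennpow_def)
    finally have "Mod \<mu> p {} \<le> 0" .
    then show ?thesis by simp
  qed
qed

lemma ess_length_ge:
  "Mod \<mu> p \<Gamma>0 = 0 \<Longrightarrow> (INF \<gamma> \<in> \<Gamma> - \<Gamma>0. curve_length \<gamma>) \<le> ess_length \<mu> p \<Gamma>"
  unfolding ess_length_def by (rule SUP_upper) auto

lemma ess_length_le:
  "(\<And>\<Gamma>0. Mod \<mu> p \<Gamma>0 = 0 \<Longrightarrow> (INF \<gamma> \<in> \<Gamma> - \<Gamma>0. curve_length \<gamma>) \<le> c) \<Longrightarrow> ess_length \<mu> p \<Gamma> \<le> c"
  unfolding ess_length_def by (rule SUP_least) auto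

lemma ess_length_anti:
  "\<Gamma> \<subseteq> \<Gamma>' \<Longrightarrow> ess_length \<mu> p \<Gamma>' \<le> ess_length \<mu> p \<Gamma>"
  unfolding ess_length_def by (intro SUP_mono) (auto intro!: INF_superset_mono)

lemma Lim_antitone:
  fixes e :: "real \<Rightarrow> ennreal"
  assumes anti: "\<And>a b. 0 < a \<Longrightarrow> a \<le> b \<Longrightarrow> e b \<le> e a"
  shows "Lim (at_right 0) e = (SUP \<delta> \<in> {0<..}. e \<delta>)"
proof (rule tendsto_Lim)
  show "\<not> trivial_limit (at_right (0::real))" by simp
  show "(e \<longlongrightarrow> (SUP \<delta> \<in> {0<..}. e \<delta>)) (at_right 0)"
  proof (rule order_tendstoI)
    fix y assume "y < (SUP \<delta> \<in> {0<..}. e \<delta>)"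
    then obtain \<delta>0 where d0: "0 < \<delta>0" "y < e \<delta>0" by (auto simp: less_SUP_iff)
    show "\<forall>\<^sub>F x in at_right 0. y < e x"
      using eventually_at_right_real[OF d0(1)]
      by eventually_elim (use d0 anti in \<open>auto intro: less_le_trans\<close>)
  next
    fix y assume y: "(SUP \<delta> \<in> {0<..}. e \<delta>) < y"
    show "\<forall>\<^sub>F x in at_right 0. e x < y"
      using eventually_at_right_less[of "0::real"]
      by eventually_elim (use y in \<open>auto intro: le_less_trans[OF SUP_upper]\<close>)
  qed
qed

lemma e_anti:
  "0 < a \<Longrightarrow> a \<le> b \<Longrightarrow> ess_length \<mu> p (lip_curves (cball x b) (cball y b))
     \<le> ess_length \<mu> p (lip_curves (cball x a) (cball y a))"
  by (rule ess_length_anti) (auto simp: lip_curves_def)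

lemma dp'_SUP:
  "dp' \<mu> p x y = (SUP \<delta> \<in> {0<..}. ess_length \<mu> p (lip_curves (cball x \<delta>) (cball y \<delta>)))"
  unfolding dp'_def by (rule Lim_antitone) (rule e_anti)

lemma lip_curve_props:
  assumes "\<gamma> \<in> lip_curves E F"
  shows "continuous_on {0..1} \<gamma>" "length_on \<gamma> 0 1 < \<infinity>"
proof -
  obtain K where K: "K-lipschitz_on {0..1} \<gamma>" using assms by (auto simp: lip_curves_def)
  then show "continuous_on {0..1} \<gamma>" by (rule lipschitz_on_continuous_on)
  show "length_on \<gamma> 0 1 < \<infinity>" using length_on_lipschitz[OF K] by (simp add: le_less_trans)
qed

lemma dp'_ge: "ennreal (dist x y) \<le> dp' \<mu> p x y"
proof (rule ennreal_le_epsilon)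
  fix \<epsilon> :: real assume \<epsilon>: "0 < \<epsilon>"
  define \<delta> where "\<delta> = \<epsilon> / 2"
  have \<delta>: "0 < \<delta>" using \<epsilon> by (simp add: \<delta>_def)
  have "ennreal (dist x y - \<epsilon>) \<le> (INF \<gamma> \<in> lip_curves (cball x \<delta>) (cball y \<delta>) - {}. curve_length \<gamma>)"
  proof (rule INF_greatest)
    fix \<gamma> assume g: "\<gamma> \<in> lip_curves (cball x \<delta>) (cball y \<delta>) - {}"
    then have "dist x (\<gamma> 0) \<le> \<delta>" "dist y (\<gamma> 1) \<le> \<delta>" by (auto simp: lip_curves_def)
    then have "dist x y - \<epsilon> \<le> dist (\<gamma> 0) (\<gamma> 1)"
      using dist_triangle[of x y "\<gamma> 0"] dist_triangle[of "\<gamma> 0" y "\<gamma> 1"] unfolding \<delta>_def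
      by (simp add: dist_commute)
    then have "ennreal (dist x y - \<epsilon>) \<le> ennreal (dist (\<gamma> 0) (\<gamma> 1))" by (rule ennreal_leI)
    also have "\<dots> \<le> curve_length \<gamma>" unfolding curve_length_def by (rule length_on_ge_dist) auto
    finally show "ennreal (dist x y - \<epsilon>) \<le> curve_length \<gamma>" .
  qed
  also have "\<dots> \<le> ess_length \<mu> p (lip_curves (cball x \<delta>) (cball y \<delta>))"
    by (rule ess_length_ge) (rule Mod_empty)
  also have "\<dots> \<le> dp' \<mu> p x y" unfolding dp'_SUP using \<delta> by (intro SUP_upper) auto
  finally have *: "ennreal (dist x y - \<epsilon>) \<le> dp' \<mu> p x y" .
  show "ennreal (dist x y) \<le> dp' \<mu> p x y + ennreal \<epsilon>"
  proof (cases "dist x y \<le> \<epsilon>")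
    case True
    then show ?thesis by (meson add_increasing ennreal_leI zero_le)
  next
    case False
    then have "ennreal (dist x y) = ennreal (dist x y - \<epsilon>) + ennreal \<epsilon>"
      using \<epsilon> by (simp add: ennreal_plus[symmetric] del: ennreal_plus)
    then show ?thesis using * by (simp add: add_right_mono)
  qed
qed



lemma e_upper:
  fixes \<mu> :: "'a::metric_space measure"
  assumes borel: "sets \<mu> = sets borel" and balls_pos: "\<And>x r. 0 < r \<Longrightarrow> 0 < emeasure \<mu> (ball x r)"
    and C: "1 \<le> C" and thick: "thick_quasiconvex \<mu> p C" and \<delta>: "0 < \<delta>"
  shows "ess_length \<mu> p (lip_curves (cball x \<delta>) (cball y \<delta>)) \<le> ennreal (C * (dist x y + 2 * \<delta>))"
proof -
  define E where "E = cball x \<delta>"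
  define F where "F = cball y \<delta>"
  define B where "B = C * (dist x y + 2 * \<delta>)"
  have meas: "cball z \<delta> \<in> sets (completion \<mu>)" for z
    using borel_closed[OF closed_cball[of z \<delta>]] borel by auto
  have posm: "0 < emeasure (completion \<mu>) (cball z \<delta>)" for z
  proof -
    have "cball z \<delta> \<in> sets \<mu>" using borel_closed[OF closed_cball[of z \<delta>]] borel by auto
    then have "emeasure (completion \<mu>) (cball z \<delta>) = emeasure \<mu> (cball z \<delta>)" by simp
    moreover have "emeasure \<mu> (ball z \<delta>) \<le> emeasure \<mu> (cball z \<delta>)"
      using \<open>cball z \<delta> \<in> sets \<mu>\<close> by (intro emeasure_mono) auto
    ultimately show ?thesis using balls_pos[OF \<delta>, of z] by simp
  qed
  have pos: "0 < Mod \<mu> p (curvesC E F C)"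
    using thick meas posm unfolding thick_quasiconvex_def E_def F_def by blast
  show ?thesis unfolding B_def[symmetric] E_def[symmetric] F_def[symmetric]
  proof (rule ess_length_le)
    fix \<Gamma>0 assume M0: "Mod \<mu> p \<Gamma>0 = 0"
    show "(INF \<gamma> \<in> lip_curves E F - \<Gamma>0. curve_length \<gamma>) \<le> ennreal B"
    proof (rule ccontr)
      assume "\<not> ?thesis"
      then have lt: "ennreal B < (INF \<gamma> \<in> lip_curves E F - \<Gamma>0. curve_length \<gamma>)" by simp
      have inG: "\<beta> \<in> \<Gamma>0" if "\<beta> \<in> lip_curves E F" "curve_length \<beta> \<le> ennreal B" for \<beta>
      proof (rule ccontr)
        assume "\<beta> \<notin> \<Gamma>0"
        then have "(INF \<gamma> \<in> lip_curves E F - \<Gamma>0. curve_length \<gamma>) \<le> curve_length \<beta>"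
          using that by (intro INF_lower) auto
        then show False using lt that(2) by simp
      qed
      have "Mod \<mu> p (curvesC E F C) \<le> Mod \<mu> p \<Gamma>0"
      proof (rule Mod_mono_adm)
        fix \<rho> assume adm: "admissible \<Gamma>0 \<rho>"
        then have \<rho>: "\<rho> \<in> borel_measurable borel" by (simp add: admissible_def)
        show "admissible (curvesC E F C) \<rho>" unfolding admissible_def
        proof (intro conjI ballI \<rho>)
          fix \<gamma> assume g: "\<gamma> \<in> curvesC E F C"
          then have gc: "continuous_on {0..1} \<gamma>" and g0: "\<gamma> 0 \<in> E" and g1: "\<gamma> 1 \<in> F"
            and gl: "curve_length \<gamma> \<le> ennreal (C * dist (\<gamma> 0) (\<gamma> 1))"
            by (auto simp: curvesC_def)
          have "dist (\<gamma> 0) (\<gamma> 1) \<le> dist x y + 2 * \<delta>"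
            using g0 g1 dist_triangle[of "\<gamma> 0" "\<gamma> 1" x] dist_triangle[of x "\<gamma> 1" y]
            by (auto simp: E_def F_def dist_commute)
          then have "C * dist (\<gamma> 0) (\<gamma> 1) \<le> B" unfolding B_def using C by (intro mult_left_mono) auto
          then have glB: "curve_length \<gamma> \<le> ennreal B" using gl by (meson ennreal_leI order_trans)
          then have gfin: "length_on \<gamma> 0 1 < \<infinity>" by (simp add: curve_length_def le_less_trans)
          obtain \<beta> where b: "(enn2real (length_on \<gamma> 0 1))-lipschitz_on {0..1} \<beta>" "\<beta> 0 = \<gamma> 0" "\<beta> 1 = \<gamma> 1"
            "length_on \<beta> 0 1 = length_on \<gamma> 0 1"
            "\<And>\<rho>. \<rho> \<in> borel_measurable borel \<Longrightarrow> line_integral \<rho> \<beta> = line_integral \<rho> \<gamma>"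
            using arc_curve[OF gc gfin] by blast
          have "\<beta> \<in> lip_curves E F" using b g0 g1 unfolding lip_curves_def by auto
          moreover have "curve_length \<beta> \<le> ennreal B" using b(4) glB by (simp add: curve_length_def)
          ultimately have "\<beta> \<in> \<Gamma>0" by (rule inG)
          then have "1 \<le> line_integral \<rho> \<beta>" using adm by (simp add: admissible_def)
          then show "1 \<le> line_integral \<rho> \<gamma>" using b(5)[OF \<rho>] by simp
        qed
      qed
      then show False using pos M0 by simp
    qed
  qed
qed

lemma dp'_le:
  fixes \<mu> :: "'a::metric_space measure"
  assumes borel: "sets \<mu> = sets borel" and balls_pos: "\<And>x r. 0 < r \<Longrightarrow> 0 < emeasure \<mu> (ball x r)"
    and C: "1 \<le> C" and thick: "thick_quasiconvex \<mu> p C"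
  shows "dp' \<mu> p x y \<le> ennreal (C * dist x y)"
proof (rule ennreal_le_epsilon)
  fix \<epsilon> :: real assume \<epsilon>: "0 < \<epsilon>"
  show "dp' \<mu> p x y \<le> ennreal (C * dist x y) + ennreal \<epsilon>"
    unfolding dp'_SUP
  proof (rule SUP_least)
    fix \<delta> :: real assume "\<delta> \<in> {0<..}"
    then have \<delta>: "0 < \<delta>" by simp
    define \<delta>' where "\<delta>' = min \<delta> (\<epsilon> / (2 * C))"
    have \<delta>': "0 < \<delta>'" "\<delta>' \<le> \<delta>" "C * (2 * \<delta>') \<le> \<epsilon>"
      using \<delta> \<epsilon> C by (auto simp: \<delta>'_def min_def field_simps)
    have "ess_length \<mu> p (lip_curves (cball x \<delta>) (cball y \<delta>)) \<le> ess_length \<mu> p (lip_curves (cball x \<delta>') (cball y \<delta>'))"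
      by (rule e_anti) (use \<delta>' in auto)
    also have "\<dots> \<le> ennreal (C * (dist x y + 2 * \<delta>'))"
      by (rule e_upper[OF borel balls_pos C thick \<delta>'(1)])
    also have "\<dots> \<le> ennreal (C * dist x y + \<epsilon>)"
      using \<delta>' by (intro ennreal_leI) (simp add: algebra_simps)
    also have "\<dots> = ennreal (C * dist x y) + ennreal \<epsilon>"
      using C \<epsilon> by (intro ennreal_plus) auto
    finally show "ess_length \<mu> p (lip_curves (cball x \<delta>) (cball y \<delta>)) \<le> ennreal (C * dist x y) + ennreal \<epsilon>" .
  qed
qed

lemma rev_lip:
  assumes "\<gamma> \<in> lip_curves E F"
  shows "(\<lambda>t. \<gamma> (1 - t)) \<in> lip_curves F E"
proof -
  obtain K where K: "K-lipschitz_on {0..1} \<gamma>" and e: "\<gamma> 0 \<in> E" "\<gamma> 1 \<in> F"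
    using assms by (auto simp: lip_curves_def)
  have "K-lipschitz_on {0..1} (\<lambda>t. \<gamma> (1 - t))"
  proof (rule lipschitz_onI)
    fix s t :: real assume "s \<in> {0..1}" "t \<in> {0..1}"
    then have "dist (\<gamma> (1 - s)) (\<gamma> (1 - t)) \<le> K * dist (1 - s) (1 - t)"
      using K by (simp add: lipschitz_on_def)
    then show "dist (\<gamma> (1 - s)) (\<gamma> (1 - t)) \<le> K * dist s t" by (simp add: dist_real_def abs_minus_commute)
  next
    show "0 \<le> K" using K by (simp add: lipschitz_on_def)
  qed
  then show ?thesis using e by (auto simp: lip_curves_def)
qed

lemma e_sym:
  "ess_length \<mu> p (lip_curves E F) \<le> ess_length \<mu> p (lip_curves F E)"
proof (rule ess_length_le)
  fix \<Gamma>0 assume M0: "Mod \<mu> p \<Gamma>0 = 0"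
  define \<Gamma>1 where "\<Gamma>1 = (\<lambda>\<gamma> t. \<gamma> (1 - t)) ` (\<Gamma>0 \<inter> lip_curves E F)"
  have "Mod \<mu> p \<Gamma>1 \<le> Mod \<mu> p \<Gamma>0"
  proof (rule Mod_mono_adm)
    fix \<rho> assume adm: "admissible \<Gamma>0 \<rho>"
    then have \<rho>: "\<rho> \<in> borel_measurable borel" by (simp add: admissible_def)
    show "admissible \<Gamma>1 \<rho>" unfolding admissible_def
    proof (intro conjI ballI \<rho>)
      fix \<gamma>' assume "\<gamma>' \<in> \<Gamma>1"
      then obtain \<gamma> where g: "\<gamma> \<in> \<Gamma>0" "\<gamma> \<in> lip_curves E F" and eq: "\<gamma>' = (\<lambda>t. \<gamma> (1 - t))"
        by (auto simp: \<Gamma>1_def)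
      have "line_integral \<rho> \<gamma>' = line_integral \<rho> \<gamma>"
        unfolding eq using lip_curve_props[OF g(2)] \<rho> by (intro reverse_curve) auto
      then show "1 \<le> line_integral \<rho> \<gamma>'" using adm g by (simp add: admissible_def)
    qed
  qed
  then have M1: "Mod \<mu> p \<Gamma>1 = 0" using M0 by simp
  have "(INF \<gamma> \<in> lip_curves E F - \<Gamma>0. curve_length \<gamma>) \<le> (INF \<gamma> \<in> lip_curves F E - \<Gamma>1. curve_length \<gamma>)"
  proof (rule INF_greatest)
    fix \<gamma>' assume g': "\<gamma>' \<in> lip_curves F E - \<Gamma>1"
    define \<beta> where "\<beta> = (\<lambda>t. \<gamma>' (1 - t))"
    have b: "\<beta> \<in> lip_curves E F" unfolding \<beta>_def using g' by (intro rev_lip) auto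
    have rr: "(\<lambda>t. \<beta> (1 - t)) = \<gamma>'" by (simp add: \<beta>_def)
    have "\<beta> \<notin> \<Gamma>0"
    proof
      assume "\<beta> \<in> \<Gamma>0"
      then have "(\<lambda>t. \<beta> (1 - t)) \<in> \<Gamma>1" using b unfolding \<Gamma>1_def by blast
      then show False using g' rr by simp
    qed
    then have "(INF \<gamma> \<in> lip_curves E F - \<Gamma>0. curve_length \<gamma>) \<le> curve_length \<beta>"
      using b by (intro INF_lower) auto
    also have "curve_length \<beta> = curve_length \<gamma>'"
      unfolding curve_length_def \<beta>_def using length_on_reflect[of \<gamma>' 1 0 1] by simp
    finally show "(INF \<gamma> \<in> lip_curves E F - \<Gamma>0. curve_length \<gamma>) \<le> curve_length \<gamma>'" .
  qed
  also have "\<dots> \<le> ess_length \<mu> p (lip_curves F E)" by (rule ess_length_ge[OF M1])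
  finally show "(INF \<gamma> \<in> lip_curves E F - \<Gamma>0. curve_length \<gamma>) \<le> ess_length \<mu> p (lip_curves F E)" .
qed

lemma dp'_sym: "dp' \<mu> p x y = dp' \<mu> p y x"
  unfolding dp'_SUP by (intro antisym SUP_mono) (auto intro: e_sym)



fun psum :: "('b \<Rightarrow> 'b \<Rightarrow> ennreal) \<Rightarrow> 'b list \<Rightarrow> ennreal" where
  "psum f (a # b # r) = f a b + psum f (b # r)"
| "psum f _ = 0"

lemma sum_psum: "(\<Sum>i < length xs - 1. f (xs ! i) (xs ! Suc i)) = psum f xs"
proof (induction f xs rule: psum.induct)
  case (1 f a b r)
  have "(\<Sum>i < length (a # b # r) - 1. f ((a # b # r) ! i) ((a # b # r) ! Suc i))
      = (\<Sum>i < Suc (length (b # r) - 1). f ((a # b # r) ! i) ((a # b # r) ! Suc i))"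
    by simp
  also have "\<dots> = f a b + (\<Sum>i < length (b # r) - 1. f ((b # r) ! i) ((b # r) ! Suc i))"
    by (subst sum.lessThan_Suc_shift) simp
  finally show ?case using 1 by simp
qed auto

lemma psum_append_tl:
  "xs \<noteq> [] \<Longrightarrow> ys \<noteq> [] \<Longrightarrow> last xs = hd ys \<Longrightarrow> psum f (xs @ tl ys) = psum f xs + psum f ys"
proof (induction xs rule: induct_list012)
  case (2 x)
  then show ?case by (cases ys) auto
next
  case (3 a b r)
  then show ?case by (simp add: add_ac)
qed auto

lemma psum_snoc: "xs \<noteq> [] \<Longrightarrow> psum f (xs @ [b]) = psum f xs + f (last xs) b"
proof (induction xs rule: induct_list012)
  case (3 x y zs)
  then show ?case by (simp add: add_ac)
qed auto

lemma psum_rev: "psum f (rev xs) = psum (\<lambda>a b. f b a) xs"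
proof (induction xs rule: induct_list012)
  case (3 x y zs)
  have "psum f (rev (x # y # zs)) = psum f (rev (y # zs) @ [x])" by simp
  also have "\<dots> = psum f (rev (y # zs)) + f y x"
    by (subst psum_snoc) (auto simp: last_rev)
  also have "\<dots> = psum (\<lambda>a b. f b a) (x # y # zs)" using 3 by (simp add: add_ac)
  finally show ?case .
qed auto

lemma psum_ge_dist:
  assumes "\<And>a b. ennreal (dist a b) \<le> f a b"
  shows "xs \<noteq> [] \<Longrightarrow> ennreal (dist (hd xs) (last xs)) \<le> psum f xs"
proof (induction xs rule: induct_list012)
  case (3 a b r)
  have "ennreal (dist a (last (b # r))) \<le> ennreal (dist a b) + ennreal (dist b (last (b # r)))"
    by (metis ennreal_leI ennreal_plus zero_le_dist dist_triangle)
  also have "\<dots> \<le> f a b + psum f (b # r)" using 3 assms by (intro add_mono) auto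
  finally show ?case by simp
qed auto

definition dpset :: "'a \<Rightarrow> 'a \<Rightarrow> 'a list set" where
  "dpset x y = {xs. 2 \<le> length xs \<and> hd xs = x \<and> last xs = y}"

lemma dp_eq: "dp \<mu> p x y = (INF xs \<in> dpset x y. psum (dp' \<mu> p) xs)"
  unfolding dp_def dpset_def sum_psum ..

lemma dp_le_dp': "dp \<mu> p x y \<le> dp' \<mu> p x y"
proof -
  have "[x, y] \<in> dpset x y" by (simp add: dpset_def)
  then show ?thesis unfolding dp_eq by (rule INF_lower2) simp
qed

lemma dp_ge: "ennreal (dist x y) \<le> dp \<mu> p x y"
  unfolding dp_eq
proof (rule INF_greatest)
  fix xs assume "xs \<in> dpset x y"
  then have "xs \<noteq> []" "hd xs = x" "last xs = y" by (auto simp: dpset_def)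
  then show "ennreal (dist x y) \<le> psum (dp' \<mu> p) xs" using psum_ge_dist[OF dp'_ge, of xs] by simp
qed

lemma dp_sym_le: "dp \<mu> p x y \<le> dp \<mu> p y x"
  unfolding dp_eq[of \<mu> p y x]
proof (rule INF_greatest)
  fix ys assume ys: "ys \<in> dpset y x"
  then have "rev ys \<in> dpset x y" by (auto simp: dpset_def hd_rev last_rev)
  then have "dp \<mu> p x y \<le> psum (dp' \<mu> p) (rev ys)" unfolding dp_eq by (rule INF_lower)
  also have "\<dots> = psum (dp' \<mu> p) ys" unfolding psum_rev by (simp add: dp'_sym[of \<mu> p])
  finally show "dp \<mu> p x y \<le> psum (dp' \<mu> p) ys" .
qed

lemma dp_sym: "dp \<mu> p x y = dp \<mu> p y x"
  by (intro antisym dp_sym_le)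

lemma ennreal_less_add_eps: "(a::ennreal) < top \<Longrightarrow> 0 < e \<Longrightarrow> a < a + ennreal e"
  by (cases a) (auto simp: ennreal_plus[symmetric] ennreal_less_iff simp del: ennreal_plus)

lemma dp_tri: "dp \<mu> p x z \<le> dp \<mu> p x y + dp \<mu> p y z"
proof (rule ennreal_le_epsilon)
  fix e :: real assume fin: "dp \<mu> p x y + dp \<mu> p y z < top" and e: "0 < e"
  have f1: "dp \<mu> p x y < top" "dp \<mu> p y z < top" using fin by (auto simp: top_unique)
  have e2: "0 < e / 2" using e by simp
  obtain xs where xs: "xs \<in> dpset x y" "psum (dp' \<mu> p) xs < dp \<mu> p x y + ennreal (e / 2)"
    using ennreal_less_add_eps[OF f1(1) e2] unfolding dp_eq[of \<mu> p x y] INF_less_iff by blast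
  obtain ys where ys: "ys \<in> dpset y z" "psum (dp' \<mu> p) ys < dp \<mu> p y z + ennreal (e / 2)"
    using ennreal_less_add_eps[OF f1(2) e2] unfolding dp_eq[of \<mu> p y z] INF_less_iff by blast
  have zs: "xs @ tl ys \<in> dpset x z"
  proof -
    have A: "xs \<noteq> []" "2 \<le> length xs" "hd xs = x" "last ys = z" "2 \<le> length ys"
      using xs ys by (auto simp: dpset_def)
    have "length (tl ys) = length ys - 1" by simp
    then have "length (tl ys) \<noteq> 0" using A by linarith
    then have B: "tl ys \<noteq> []" by (metis list.size(3))
    have "last (tl ys) = last ys" using B by (cases ys) auto
    with A B have "last (tl ys) = last ys" "tl ys \<noteq> []" "2 \<le> length xs" "hd xs = x" "last ys = z" "xs \<noteq> []" by auto
    then show ?thesis by (auto simp: dpset_def)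
  qed
  have "dp \<mu> p x z \<le> psum (dp' \<mu> p) (xs @ tl ys)" unfolding dp_eq by (rule INF_lower[OF zs])
  also have "\<dots> = psum (dp' \<mu> p) xs + psum (dp' \<mu> p) ys"
    using xs ys by (intro psum_append_tl) (auto simp: dpset_def)
  also have "\<dots> \<le> (dp \<mu> p x y + ennreal (e / 2)) + (dp \<mu> p y z + ennreal (e / 2))"
    using xs ys by (intro add_mono) auto
  also have "\<dots> = dp \<mu> p x y + dp \<mu> p y z + ennreal e"
    using e by (simp add: add_ac ennreal_plus[symmetric] del: ennreal_plus)
  finally show "dp \<mu> p x z \<le> dp \<mu> p x y + dp \<mu> p y z + ennreal e" .
qed

theorem lemma5p8:
  fixes \<mu> :: "'a::metric_space measure" and p :: ennreal and C :: real
  assumes proper: "\<And>(x::'a) r. compact (cball x r)"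
    and borel: "sets \<mu> = sets borel"
    and balls_pos: "\<And>x r. 0 < r \<Longrightarrow> 0 < emeasure \<mu> (ball x r)"
    and balls_fin: "\<And>x r. 0 < r \<Longrightarrow> emeasure \<mu> (ball x r) < \<infinity>"
    and p: "1 \<le> p"
    and C: "1 \<le> C"
    and thick: "thick_quasiconvex \<mu> p C"
  shows "(\<forall>x y. dp \<mu> p x y \<noteq> \<infinity>)
       \<and> Metric_space UNIV (\<lambda>x y. enn2real (dp \<mu> p x y))
       \<and> (\<forall>x y. ennreal (dist x y) \<le> dp \<mu> p x y \<and> dp \<mu> p x y \<le> ennreal (C * dist x y))"
proof -
  have up: "dp \<mu> p x y \<le> ennreal (C * dist x y)" for x y
    using dp_le_dp'[of \<mu> p x y] dp'_le[OF borel balls_pos C thick, of x y] by (rule order_trans)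
  have fin: "dp \<mu> p x y < top" for x y using up[of x y] by (simp add: le_less_trans)
  have zero: "dp \<mu> p x x = 0" for x using up[of x x] by simp
  have "Metric_space UNIV (\<lambda>x y. enn2real (dp \<mu> p x y))"
  proof
    fix x y z :: 'a
    show "0 \<le> enn2real (dp \<mu> p x y)" by simp
    show "enn2real (dp \<mu> p x y) = enn2real (dp \<mu> p y x)" by (simp add: dp_sym[of \<mu> p x y])
    show "enn2real (dp \<mu> p x y) = 0 \<longleftrightarrow> x = y"
    proof
      assume "enn2real (dp \<mu> p x y) = 0"
      then have "dp \<mu> p x y = 0" using fin[of x y] by (auto simp: enn2real_eq_0_iff)
      then have "ennreal (dist x y) \<le> 0" using dp_ge[of x y \<mu> p] by simp
      then show "x = y" by simp
    qed (simp add: zero)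
    have "enn2real (dp \<mu> p x z) \<le> enn2real (dp \<mu> p x y + dp \<mu> p y z)"
      using dp_tri[of \<mu> p x z y] fin[of x y] fin[of y z] by (intro enn2real_mono) auto
    also have "\<dots> = enn2real (dp \<mu> p x y) + enn2real (dp \<mu> p y z)"
      using fin[of x y] fin[of y z] by (simp add: enn2real_plus)
    finally show "enn2real (dp \<mu> p x z) \<le> enn2real (dp \<mu> p x y) + enn2real (dp \<mu> p y z)" .
  qed
  moreover have "dp \<mu> p x y \<noteq> \<infinity>" for x y using fin[of x y] by simp
  ultimately show ?thesis using up dp_ge by blast
qed


end
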